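(* Let $A=[D,\boldsymbol n,\dots,\boldsymbol n]\in\mathbb Z^{\ell\times(\ell+k)}$ be a Type I$_k$ weight matrix such that $V_A$ is a faithful $\mathbb T^\ell$-module, and write $\alpha=\alpha(A)$, $m_i=m_i(A)$, $\eta=\eta(A)$. Then the algebra of $\mathbb T^\ell$-invariant polynomials in $z_1,\dots,z_{\ell+k},\overline{z_1},\dots,\overline{z_{\ell+k}}$ with complex coefficients (equivalently, via real and imaginary parts, $\mathbb R[V_A]^{\mathbb T^\ell}$) is generated by: (1) the $\ell$ quadratics $r_i=z_i\overline{z_i}$, $1\le i\le\ell$; (2) the $k^2$ quadratics $p_{i,j}=z_{\ell+i}\overline{z_{\ell+j}}$, $1\le i,j\le k$; (3) the $\binom{\alpha+k-1}{k-1}$ monomials $q_{\boldsymbol s}=\prod_{i=1}^\ell z_i^{m_i}\prod_{i=1}^kz_{\ell+i}^{s_i}$ of degree $\eta$, for $\boldsymbol s=(s_1,\dots,s_k)\in\mathbb Z_{\ge0}^k$ with $\sum_is_i=\alpha$; (4) their conjugates $\overline{q_{\boldsymbol s}}$. Moreover, $\mathbb R[M_0(A)]$ (complexified) is generated by the images of the generators in (2), (3), (4).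
   Context: For $A=(a_{ij})\in\mathbb Z^{\ell\times n}$ with columns $\boldsymbol a_j$, $V_A=\mathbb C^n$ (coordinates $z_j$) with $\mathbb T^\ell$ acting by $z_j\mapsto\boldsymbol t^{\boldsymbol a_j}z_j$, $\boldsymbol t^{\boldsymbol a_j}=\prod_it_i^{a_{ij}}$; faithful = effective. Moment map $J_i=\tfrac12\sum_ja_{ij}z_j\overline{z_j}$, $Z_A=J_A^{-1}(0)$, $M_0(A)=Z_A/\mathbb T^\ell$, $\mathbb R[M_0(A)]=\mathbb R[V_A]^{\mathbb T^\ell}/(\text{invariant polynomials vanishing on }Z_A)$. Type I$_k$: $A=[D,\boldsymbol n,\dots,\boldsymbol n]$ ($k$ copies of $\boldsymbol n$) with $D=\operatorname{diag}(-a_1,\dots,-a_\ell)$, $a_i>0$, $\boldsymbol n=(n_1,\dots,n_\ell)^T$, $n_i>0$. $\alpha(A)=\operatorname{lcm}(a_1,\dots,a_\ell)$, $m_i(A)=n_i\alpha(A)/a_i$, $\beta(A)=\sum_im_i(A)$, $\eta(A)=\alpha(A)+\beta(A)$. *)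

theory Defs
  imports "HOL-Analysis.Analysis" "HOL-Library.Poly_Mapping"
begin

(* Variables of the polynomial ring C[z_j, conj z_j]: Inl j stands for z_j, Inr j for conj(z_j).
   Indices are 0-based: z_0..z_{l+k-1}. *)
type_synonym cpoly = "((nat + nat) \<Rightarrow>\<^sub>0 nat) \<Rightarrow>\<^sub>0 complex"

definition var_idx :: "nat + nat \<Rightarrow> nat" where
  "var_idx x = (case x of Inl j \<Rightarrow> j | Inr j \<Rightarrow> j)"

definition Var :: "nat + nat \<Rightarrow> cpoly" where
  "Var x = Poly_Mapping.single (Poly_Mapping.single x 1) 1"

definition Const :: "complex \<Rightarrow> cpoly" where
  "Const c = Poly_Mapping.single 0 c"

definition var_val :: "(nat \<Rightarrow> complex) \<Rightarrow> nat + nat \<Rightarrow> complex" where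
  "var_val z x = (case x of Inl j \<Rightarrow> z j | Inr j \<Rightarrow> cnj (z j))"

definition peval :: "cpoly \<Rightarrow> (nat \<Rightarrow> complex) \<Rightarrow> complex" where
  "peval f z = (\<Sum>m\<in>Poly_Mapping.keys f. Poly_Mapping.lookup f m * (\<Prod>x\<in>Poly_Mapping.keys (m :: (nat + nat) \<Rightarrow>\<^sub>0 nat). var_val z x ^ Poly_Mapping.lookup m x))"

definition in_vars :: "nat \<Rightarrow> cpoly \<Rightarrow> bool" where
  "in_vars n f \<longleftrightarrow> (\<forall>m\<in>Poly_Mapping.keys f. \<forall>x\<in>Poly_Mapping.keys m. var_idx x < n)"

definition in_torus :: "nat \<Rightarrow> (nat \<Rightarrow> complex) \<Rightarrow> bool" where
  "in_torus l t \<longleftrightarrow> (\<forall>i<l. cmod (t i) = 1)"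

definition tchar :: "(nat \<Rightarrow> nat \<Rightarrow> int) \<Rightarrow> nat \<Rightarrow> (nat \<Rightarrow> complex) \<Rightarrow> nat \<Rightarrow> complex" where
  "tchar A l t j = (\<Prod>i<l. t i powi A i j)"

definition act :: "(nat \<Rightarrow> nat \<Rightarrow> int) \<Rightarrow> nat \<Rightarrow> (nat \<Rightarrow> complex) \<Rightarrow> (nat \<Rightarrow> complex) \<Rightarrow> nat \<Rightarrow> complex" where
  "act A l t z j = tchar A l t j * z j"

definition faithful :: "(nat \<Rightarrow> nat \<Rightarrow> int) \<Rightarrow> nat \<Rightarrow> nat \<Rightarrow> bool" where
  "faithful A l n \<longleftrightarrow> (\<forall>t. in_torus l t \<longrightarrow> (\<forall>j<n. tchar A l t j = 1) \<longrightarrow> (\<forall>i<l. t i = 1))"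

definition inv_polys :: "(nat \<Rightarrow> nat \<Rightarrow> int) \<Rightarrow> nat \<Rightarrow> nat \<Rightarrow> cpoly set" where
  "inv_polys A l n = {f. in_vars n f \<and>
      (\<forall>t z. in_torus l t \<longrightarrow> peval f (act A l t z) = peval f z)}"

(* zero fibre of the moment map, Z_A, inside V_A = C^n *)
definition zero_fibre :: "(nat \<Rightarrow> nat \<Rightarrow> int) \<Rightarrow> nat \<Rightarrow> nat \<Rightarrow> (nat \<Rightarrow> complex) set" where
  "zero_fibre A l n = {z. (\<forall>j\<ge>n. z j = 0) \<and>
      (\<forall>i<l. (1/2) * (\<Sum>j<n. of_int (A i j) * (cmod (z j))\<^sup>2) = 0)}"

inductive_set gen_alg :: "cpoly set \<Rightarrow> cpoly set" for G where
  const: "Const c \<in> gen_alg G"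
| gen: "g \<in> G \<Longrightarrow> g \<in> gen_alg G"
| add: "f \<in> gen_alg G \<Longrightarrow> g \<in> gen_alg G \<Longrightarrow> f + g \<in> gen_alg G"
| mult: "f \<in> gen_alg G \<Longrightarrow> g \<in> gen_alg G \<Longrightarrow> f * g \<in> gen_alg G"

definition typeI :: "(nat \<Rightarrow> nat) \<Rightarrow> (nat \<Rightarrow> nat) \<Rightarrow> nat \<Rightarrow> nat \<Rightarrow> nat \<Rightarrow> int" where
  "typeI a nv l i j = (if j < l then (if i = j then - int (a i) else 0) else int (nv i))"

definition alphaA :: "(nat \<Rightarrow> nat) \<Rightarrow> nat \<Rightarrow> nat" where
  "alphaA a l = Lcm (a ` {..<l})"

definition mA :: "(nat \<Rightarrow> nat) \<Rightarrow> (nat \<Rightarrow> nat) \<Rightarrow> nat \<Rightarrow> nat \<Rightarrow> nat" where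
  "mA a nv l i = nv i * alphaA a l div a i"

definition betaA :: "(nat \<Rightarrow> nat) \<Rightarrow> (nat \<Rightarrow> nat) \<Rightarrow> nat \<Rightarrow> nat" where
  "betaA a nv l = (\<Sum>i<l. mA a nv l i)"

definition etaA :: "(nat \<Rightarrow> nat) \<Rightarrow> (nat \<Rightarrow> nat) \<Rightarrow> nat \<Rightarrow> nat" where
  "etaA a nv l = alphaA a l + betaA a nv l"

definition gens_r :: "nat \<Rightarrow> cpoly set" where
  "gens_r l = {Var (Inl i) * Var (Inr i) | i. i < l}"

definition gens_p :: "nat \<Rightarrow> nat \<Rightarrow> cpoly set" where
  "gens_p l k = {Var (Inl (l + i)) * Var (Inr (l + j)) | i j. i < k \<and> j < k}"

definition svecs :: "nat \<Rightarrow> nat \<Rightarrow> (nat \<Rightarrow> nat) set" where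
  "svecs k alpha = {s. (\<forall>i\<ge>k. s i = 0) \<and> (\<Sum>i<k. s i) = alpha}"

(* q_s for side = Inl, conj(q_s) for side = Inr *)
definition qmono :: "(nat \<Rightarrow> nat + nat) \<Rightarrow> (nat \<Rightarrow> nat) \<Rightarrow> (nat \<Rightarrow> nat) \<Rightarrow> nat \<Rightarrow> nat \<Rightarrow> (nat \<Rightarrow> nat) \<Rightarrow> cpoly" where
  "qmono side a nv l k s = (\<Prod>i<l. Var (side i) ^ mA a nv l i) * (\<Prod>i<k. Var (side (l + i)) ^ s i)"

definition gens_q :: "(nat \<Rightarrow> nat) \<Rightarrow> (nat \<Rightarrow> nat) \<Rightarrow> nat \<Rightarrow> nat \<Rightarrow> cpoly set" where
  "gens_q a nv l k = qmono Inl a nv l k ` svecs k (alphaA a l)"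

definition gens_qbar :: "(nat \<Rightarrow> nat) \<Rightarrow> (nat \<Rightarrow> nat) \<Rightarrow> nat \<Rightarrow> nat \<Rightarrow> cpoly set" where
  "gens_qbar a nv l k = qmono Inr a nv l k ` svecs k (alphaA a l)"

end

theory Submission
  imports Defs "HOL-Computational_Algebra.Polynomial"
begin

definition mon :: "((nat + nat) \<Rightarrow>\<^sub>0 nat) \<Rightarrow> (nat \<Rightarrow> complex) \<Rightarrow> complex" where
  "mon m z = (\<Prod>x\<in>Poly_Mapping.keys m. var_val z x ^ Poly_Mapping.lookup m x)"

lemma mon_superset:
  assumes "finite S" "Poly_Mapping.keys m \<subseteq> S"
  shows "mon m z = (\<Prod>x\<in>S. var_val z x ^ Poly_Mapping.lookup m x)"
  unfolding mon_def
  by (rule prod.mono_neutral_left[OF assms]) (auto simp: in_keys_iff)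

lemma mon_add: "mon (a + b) z = mon a z * mon b z"
proof -
  let ?S = "Poly_Mapping.keys a \<union> Poly_Mapping.keys b"
  have f: "finite ?S" by simp
  have "mon (a+b) z = (\<Prod>x\<in>?S. var_val z x ^ Poly_Mapping.lookup (a+b) x)"
    by (rule mon_superset[OF f keys_add])
  also have "\<dots> = (\<Prod>x\<in>?S. var_val z x ^ Poly_Mapping.lookup a x) * (\<Prod>x\<in>?S. var_val z x ^ Poly_Mapping.lookup b x)"
    by (simp add: lookup_add power_add prod.distrib)
  also have "\<dots> = mon a z * mon b z"
    using mon_superset[OF f, of a z] mon_superset[OF f, of b z] by auto
  finally show ?thesis .
qed

lemma mon_zero[simp]: "mon 0 z = 1" by (simp add: mon_def)

lemma mon_single: "mon (Poly_Mapping.single x e) z = var_val z x ^ e"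
  by (simp add: mon_def)

lemma peval_alt: "peval f z = (\<Sum>m\<in>Poly_Mapping.keys f. Poly_Mapping.lookup f m * mon m z)"
  by (simp add: peval_def mon_def)

lemma peval_superset:
  assumes "finite S" "Poly_Mapping.keys f \<subseteq> S"
  shows "peval f z = (\<Sum>m\<in>S. Poly_Mapping.lookup f m * mon m z)"
  unfolding peval_alt
  by (rule sum.mono_neutral_left[OF assms]) (auto simp: in_keys_iff)

lemma peval_add: "peval (f + g) z = peval f z + peval g z"
proof -
  let ?S = "Poly_Mapping.keys f \<union> Poly_Mapping.keys g"
  have fS: "finite ?S" by simp
  have "peval (f+g) z = (\<Sum>m\<in>?S. Poly_Mapping.lookup (f+g) m * mon m z)"
    by (rule peval_superset[OF fS keys_add])
  also have "\<dots> = (\<Sum>m\<in>?S. Poly_Mapping.lookup f m * mon m z) + (\<Sum>m\<in>?S. Poly_Mapping.lookup g m * mon m z)"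
    by (simp add: lookup_add distrib_right sum.distrib)
  also have "\<dots> = peval f z + peval g z"
    using peval_superset[OF fS, of f z] peval_superset[OF fS, of g z] by auto
  finally show ?thesis .
qed

lemma peval_zero[simp]: "peval 0 z = 0" by (simp add: peval_def)

lemma peval_sum: "peval (\<Sum>i\<in>I. f i) z = (\<Sum>i\<in>I. peval (f i) z)"
  by (induction I rule: infinite_finite_induct) (auto simp: peval_add)

lemma peval_single: "peval (Poly_Mapping.single m c) z = c * mon m z"
  by (simp add: peval_alt)

lemma pm_expand: "f = (\<Sum>m\<in>Poly_Mapping.keys f. Poly_Mapping.single m (Poly_Mapping.lookup f m))"
proof (rule poly_mapping_eqI)
  fix k
  show "Poly_Mapping.lookup f k = Poly_Mapping.lookup (\<Sum>m\<in>Poly_Mapping.keys f. Poly_Mapping.single m (Poly_Mapping.lookup f m)) k"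
    by (cases "k \<in> Poly_Mapping.keys f") (auto simp: lookup_sum lookup_single when_def in_keys_iff)
qed

lemma peval_mult: "peval (f * g) z = peval f z * peval g z"
proof -
  let ?F = "Poly_Mapping.keys f" and ?G = "Poly_Mapping.keys g"
  have "f * g = (\<Sum>a\<in>?F. Poly_Mapping.single a (Poly_Mapping.lookup f a)) * (\<Sum>b\<in>?G. Poly_Mapping.single b (Poly_Mapping.lookup g b))"
    using pm_expand[of f] pm_expand[of g] by simp
  also have "\<dots> = (\<Sum>a\<in>?F. \<Sum>b\<in>?G. Poly_Mapping.single (a+b) (Poly_Mapping.lookup f a * Poly_Mapping.lookup g b))"
    by (simp add: sum_distrib_left sum_distrib_right mult_single) (rule sum.swap)
  finally have "peval (f*g) z = (\<Sum>a\<in>?F. \<Sum>b\<in>?G. Poly_Mapping.lookup f a * Poly_Mapping.lookup g b * (mon a z * mon b z))"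
    by (simp add: peval_sum peval_single mon_add)
  also have "\<dots> = peval f z * peval g z"
    unfolding peval_alt sum_product by (simp add: mult_ac)
  finally show ?thesis .
qed

lemma peval_Const[simp]: "peval (Const c) z = c"
  by (simp add: Const_def peval_single)

lemma peval_Var[simp]: "peval (Var x) z = var_val z x"
  by (simp add: Var_def peval_single mon_single)

lemma peval_power: "peval (f ^ n) z = peval f z ^ n"
  by (induction n) (auto simp: peval_mult simp flip: Const_def single_one)

lemma peval_prod: "peval (\<Prod>i\<in>I. f i) z = (\<Prod>i\<in>I. peval (f i) z)"
  by (induction I rule: infinite_finite_induct) (auto simp: peval_mult simp flip: single_one Const_def)

lemma circle_infinite: "infinite {u::complex. cmod u = 1}"
proof
  assume fin: "finite {u::complex. cmod u = 1}"
  have "cis ` {0..pi} \<subseteq> {u. cmod u = 1}" by (auto simp: norm_cis)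
  hence "finite (cis ` {0..pi})" using fin finite_subset by blast
  moreover have "inj_on cis {0..pi}"
  proof (rule inj_onI)
    fix x y assume xy: "x \<in> {0..pi}" "y \<in> {0..pi}" "cis x = cis y"
    hence "cos x = cos y" by (metis cis.sel(1))
    moreover have "0 \<le> x" "x \<le> pi" "0 \<le> y" "y \<le> pi" using xy by auto
    ultimately show "x = y" using cos_inj_pi by blast
  qed
  ultimately have "finite {0..pi}" using finite_imageD by blast
  thus False using infinite_Icc[of 0 pi] pi_gt_zero by auto
qed

lemma term_aux:
  fixes u :: complex and \<rho> :: real and g :: complex
  assumes u0: "u \<noteq> 0" and cu: "cnj u = inverse u" and b: "b \<le> D"
  shows "g * (of_real \<rho>) ^ (a + b) * u ^ (a + D - b) = u ^ D * (g * (of_real \<rho> * u) ^ a * cnj (of_real \<rho> * u) ^ b)"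
proof -
  have e1: "u ^ (a + D - b) = u ^ a * (u ^ D * inverse u ^ b)"
  proof -
    have "a + D - b = a + (D - b)" using b by simp
    hence "u ^ (a + D - b) = u ^ a * u ^ (D - b)" by (simp add: power_add)
    also have "u ^ (D - b) = u ^ D / u ^ b" using u0 b by (rule power_diff)
    finally show ?thesis by (simp add: divide_inverse power_inverse)
  qed
  have e2: "cnj (of_real \<rho> * u) = of_real \<rho> * inverse u" by (simp add: cu)
  show ?thesis unfolding e1 e2 power_mult_distrib power_add by (simp add: mult_ac)
qed

lemma uni_poly:
  fixes c :: "nat \<Rightarrow> complex"
  assumes "finite F" "infinite R" "\<forall>x\<in>R. (\<Sum>k\<in>F. c k * x ^ k) = 0"
  shows "\<forall>k\<in>F. c k = 0"
proof -
  define p where "p = (\<Sum>k\<in>F. monom (c k) k)"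
  have ev: "poly p x = (\<Sum>k\<in>F. c k * x ^ k)" for x
    by (simp add: p_def poly_sum poly_monom)
  have "p = 0"
  proof (rule ccontr)
    assume "p \<noteq> 0"
    hence "finite {x. poly p x = 0}" by (rule poly_roots_finite)
    moreover have "R \<subseteq> {x. poly p x = 0}" using assms(3) ev by auto
    ultimately show False using assms(2) finite_subset by blast
  qed
  show ?thesis
  proof
    fix k assume k: "k \<in> F"
    have "coeff p k = (\<Sum>j\<in>F. if j = k then c j else 0)"
      by (simp add: p_def coeff_sum coeff_monom)
    also have "\<dots> = c k" using k assms(1) by (simp add: sum.delta)
    finally show "c k = 0" using \<open>p = 0\<close> by simp
  qed
qed

lemma group_poly:
  fixes c :: "'a \<Rightarrow> complex"
  assumes "finite F" "infinite R" "\<forall>x\<in>R. (\<Sum>y\<in>F. c y * x ^ h y) = 0" "y0 \<in> F"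
  shows "(\<Sum>y\<in>{y\<in>F. h y = h y0}. c y) = 0"
proof -
  have "\<forall>x\<in>R. (\<Sum>e\<in>h ` F. (\<Sum>y\<in>{y\<in>F. h y = e}. c y) * x ^ e) = 0"
  proof
    fix x assume "x \<in> R"
    have "(\<Sum>e\<in>h ` F. (\<Sum>y\<in>{y\<in>F. h y = e}. c y) * x ^ e)
        = (\<Sum>e\<in>h ` F. (\<Sum>y\<in>{y\<in>F. h y = e}. c y * x ^ h y))"
      by (simp add: sum_distrib_right)
    also have "\<dots> = (\<Sum>y\<in>F. c y * x ^ h y)"
      by (rule sum.image_gen[symmetric]) (rule assms(1))
    finally show "(\<Sum>e\<in>h ` F. (\<Sum>y\<in>{y\<in>F. h y = e}. c y) * x ^ e) = 0"
      using assms(3) \<open>x \<in> R\<close> by simp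
  qed
  from uni_poly[OF finite_imageI[OF assms(1)] assms(2) this] assms(4)
  show ?thesis by auto
qed

lemma biv_poly:
  fixes g :: "nat \<times> nat \<Rightarrow> complex"
  assumes fin: "finite F" and z: "\<forall>w. (\<Sum>x\<in>F. g x * w ^ fst x * cnj w ^ snd x) = 0"
    and x0: "x0 \<in> F"
  shows "g x0 = 0"
proof -
  define D where "D = (\<Sum>x\<in>F. snd x)"
  have qD: "snd x \<le> D" if "x \<in> F" for x
    unfolding D_def using member_le_sum[of x F snd] fin that by auto
  define h where "h = (\<lambda>x::nat\<times>nat. fst x + D - snd x)"
  define s where "s = (\<lambda>x::nat\<times>nat. fst x + snd x)"
  have step1: "(\<Sum>y\<in>{y\<in>F. h y = h x0}. g y * (of_real \<rho>) ^ s y) = 0" if "\<rho> > 0" for \<rho> :: real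
  proof -
    have "\<forall>u\<in>{u::complex. cmod u = 1}. (\<Sum>y\<in>F. (g y * (of_real \<rho>) ^ s y) * u ^ h y) = 0"
    proof
      fix u :: complex assume "u \<in> {u. cmod u = 1}"
      hence u1: "cmod u = 1" by simp
      hence u0: "u \<noteq> 0" by auto
      have cu: "cnj u = inverse u"
      proof -
        have "u * cnj u = 1" using u1 by (simp add: complex_mult_cnj cmod_def)
        thus ?thesis using u0 by (simp add: field_simps)
      qed
      have trm: "g y * (of_real \<rho>) ^ s y * u ^ h y = u ^ D * (g y * (of_real \<rho> * u) ^ fst y * cnj (of_real \<rho> * u) ^ snd y)"
        if "y \<in> F" for y
        unfolding s_def h_def by (rule term_aux[OF u0 cu qD[OF that]])
      have "(\<Sum>y\<in>F. (g y * (of_real \<rho>) ^ s y) * u ^ h y)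
          = u ^ D * (\<Sum>y\<in>F. g y * (of_real \<rho> * u) ^ fst y * cnj (of_real \<rho> * u) ^ snd y)"
        by (simp add: sum_distrib_left trm)
      also have "\<dots> = 0" using z[rule_format, of "of_real \<rho> * u"] by simp
      finally show "(\<Sum>y\<in>F. (g y * (of_real \<rho>) ^ s y) * u ^ h y) = 0" .
    qed
    from group_poly[OF fin circle_infinite this x0] show ?thesis .
  qed
  let ?F = "{y\<in>F. h y = h x0}"
  have fin2: "finite ?F" using fin by simp
  have inf2: "infinite (of_real ` {0::real<..} :: complex set)"
  proof
    assume "finite (of_real ` {0::real<..} :: complex set)"
    moreover have "inj_on (of_real :: real \<Rightarrow> complex) {0<..}" by (simp add: inj_on_def)
    ultimately have "finite {0::real<..}" by (rule finite_imageD)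
    thus False using infinite_Ioi[of "0::real"] by simp
  qed
  have "\<forall>x\<in>(of_real ` {0::real<..} :: complex set). (\<Sum>y\<in>?F. g y * x ^ s y) = 0"
    using step1 by auto
  from group_poly[OF fin2 inf2 this, of x0] x0
  have A: "(\<Sum>y\<in>{y\<in>?F. s y = s x0}. g y) = 0" by simp
  have eqset: "{y\<in>?F. s y = s x0} = {x0}"
  proof -
    have "y = x0" if "y \<in> F" "h y = h x0" "s y = s x0" for y
    proof -
      obtain a b where y: "y = (a,b)" by (cases y)
      obtain a0 b0 where y0: "x0 = (a0,b0)" by (cases x0)
      have "b \<le> D" "b0 \<le> D" using qD[OF that(1)] qD[OF x0] y y0 by auto
      moreover have "a + D - b = a0 + D - b0" "a + b = a0 + b0"
        using that(2,3) y y0 unfolding h_def s_def by auto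
      ultimately have "a = a0 \<and> b = b0" by linarith
      thus ?thesis using y y0 by simp
    qed
    thus ?thesis using x0 by auto
  qed
  show ?thesis using A[unfolded eqset] by simp
qed

lemma digits_unique:
  fixes B :: nat
  assumes "\<forall>j<N. d j < B" "\<forall>j<N. e j < B" "(\<Sum>j<N. d j * B ^ j) = (\<Sum>j<N. e j * B ^ j)"
  shows "\<forall>j<N. d j = e j"
  using assms
proof (induction N arbitrary: d e)
  case 0 then show ?case by simp
next
  case (Suc N)
  have sd: "(\<Sum>j<Suc N. d j * B ^ j) = d 0 + B * (\<Sum>j<N. d (Suc j) * B ^ j)" for d :: "nat \<Rightarrow> nat"
    by (simp add: sum.lessThan_Suc_shift sum_distrib_left mult_ac del: sum.lessThan_Suc)
  have B: "B > 0" using Suc.prems(1) by (metis gr_zeroI less_nat_zero_code zero_less_Suc)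
  have eq: "d 0 + B * (\<Sum>j<N. d (Suc j) * B ^ j) = e 0 + B * (\<Sum>j<N. e (Suc j) * B ^ j)"
    using Suc.prems(3) sd[of d] sd[of e] by simp
  have d0: "d 0 < B" "e 0 < B" using Suc.prems(1,2) by auto
  have "(d 0 + B * (\<Sum>j<N. d (Suc j) * B ^ j)) mod B = d 0" using d0 by simp
  moreover have "(e 0 + B * (\<Sum>j<N. e (Suc j) * B ^ j)) mod B = e 0" using d0 by simp
  ultimately have h0: "d 0 = e 0" using eq by simp
  have "(d 0 + B * (\<Sum>j<N. d (Suc j) * B ^ j)) div B = (\<Sum>j<N. d (Suc j) * B ^ j)" using d0 B by simp
  moreover have "(e 0 + B * (\<Sum>j<N. e (Suc j) * B ^ j)) div B = (\<Sum>j<N. e (Suc j) * B ^ j)" using d0 B by simp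
  ultimately have s1: "(\<Sum>j<N. d (Suc j) * B ^ j) = (\<Sum>j<N. e (Suc j) * B ^ j)" using eq by simp
  have b1: "\<forall>j<N. d (Suc j) < B" and b2: "\<forall>j<N. e (Suc j) < B" using Suc.prems(1,2) by auto
  have "\<forall>j<N. d (Suc j) = e (Suc j)" using Suc.IH[OF b1 b2 s1] .
  with h0 show ?case by (metis less_Suc_eq_0_disj)
qed

lemma mon_kron:
  assumes "Poly_Mapping.keys m \<subseteq> Inl ` {..<N} \<union> Inr ` {..<N}"
  shows "mon m (\<lambda>j. w ^ (B ^ j)) =
    w ^ (\<Sum>j<N. Poly_Mapping.lookup m (Inl j) * B ^ j) * cnj w ^ (\<Sum>j<N. Poly_Mapping.lookup m (Inr j) * B ^ j)"
proof -
  let ?z = "\<lambda>j. w ^ (B ^ j)"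
  have "mon m ?z = (\<Prod>x\<in>Inl ` {..<N} \<union> Inr ` {..<N}. var_val ?z x ^ Poly_Mapping.lookup m x)"
    by (rule mon_superset[OF _ assms]) simp
  also have "\<dots> = (\<Prod>x\<in>Inl ` {..<N}. var_val ?z x ^ Poly_Mapping.lookup m x) *
                  (\<Prod>x\<in>Inr ` {..<N}. var_val ?z x ^ Poly_Mapping.lookup m x)"
    by (rule prod.union_disjoint) auto
  also have "(\<Prod>x\<in>Inl ` {..<N}. var_val ?z x ^ Poly_Mapping.lookup m x) = (\<Prod>j<N. w ^ (Poly_Mapping.lookup m (Inl j) * B ^ j))"
    by (subst prod.reindex) (auto simp: var_val_def power_mult[symmetric] mult.commute)
  also have "(\<Prod>x\<in>Inr ` {..<N}. var_val ?z x ^ Poly_Mapping.lookup m x) = (\<Prod>j<N. cnj w ^ (Poly_Mapping.lookup m (Inr j) * B ^ j))"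
    by (subst prod.reindex) (auto simp: var_val_def power_mult[symmetric] mult.commute)
  finally show ?thesis by (simp add: power_sum)
qed

lemma mon_indep:
  fixes K :: "((nat + nat) \<Rightarrow>\<^sub>0 nat) set"
  assumes fin: "finite K" and z: "\<forall>z. (\<Sum>m\<in>K. d m * mon m z) = 0" and m0: "m0 \<in> K"
  shows "d m0 = 0"
proof -
  define B where "B = Suc (\<Sum>m\<in>K. \<Sum>x\<in>Poly_Mapping.keys m. Poly_Mapping.lookup m x)"
  define N where "N = Suc (\<Sum>m\<in>K. \<Sum>x\<in>Poly_Mapping.keys m. var_idx x)"
  have lB: "Poly_Mapping.lookup m x < B" if "m \<in> K" for m x
  proof (cases "x \<in> Poly_Mapping.keys m")
    case True
    have "Poly_Mapping.lookup m x \<le> (\<Sum>x\<in>Poly_Mapping.keys m. Poly_Mapping.lookup m x)"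
      using True by (intro member_le_sum) auto
    also have "\<dots> \<le> (\<Sum>m\<in>K. \<Sum>x\<in>Poly_Mapping.keys m. Poly_Mapping.lookup m x)"
      using that fin by (intro member_le_sum) auto
    finally show ?thesis unfolding B_def by simp
  next
    case False then show ?thesis by (simp add: B_def in_keys_iff)
  qed
  have kN: "Poly_Mapping.keys m \<subseteq> Inl ` {..<N} \<union> Inr ` {..<N}" if "m \<in> K" for m
  proof
    fix x assume x: "x \<in> Poly_Mapping.keys m"
    have "var_idx x \<le> (\<Sum>x\<in>Poly_Mapping.keys m. var_idx x)"
      using x by (intro member_le_sum) auto
    also have "\<dots> \<le> (\<Sum>m\<in>K. \<Sum>x\<in>Poly_Mapping.keys m. var_idx x)"
      using that fin by (intro member_le_sum) auto
    finally have "var_idx x < N" unfolding N_def by simp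
    thus "x \<in> Inl ` {..<N} \<union> Inr ` {..<N}" by (cases x) (auto simp: var_idx_def)
  qed
  define P where "P (m :: (nat + nat) \<Rightarrow>\<^sub>0 nat) = (\<Sum>j<N. Poly_Mapping.lookup m (Inl j) * B ^ j)" for m
  define Q where "Q (m :: (nat + nat) \<Rightarrow>\<^sub>0 nat) = (\<Sum>j<N. Poly_Mapping.lookup m (Inr j) * B ^ j)" for m
  define PQ where "PQ (m :: (nat + nat) \<Rightarrow>\<^sub>0 nat) = (P m, Q m)" for m
  have inj: "inj_on PQ K"
  proof (rule inj_onI)
    fix m m' assume mm: "m \<in> K" "m' \<in> K" "PQ m = PQ m'"
    have l: "\<forall>j<N. Poly_Mapping.lookup m (Inl j) = Poly_Mapping.lookup m' (Inl j)"
      using mm lB unfolding PQ_def P_def by (intro digits_unique) auto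
    have r: "\<forall>j<N. Poly_Mapping.lookup m (Inr j) = Poly_Mapping.lookup m' (Inr j)"
      using mm lB unfolding PQ_def Q_def by (intro digits_unique) auto
    show "m = m'"
    proof (rule poly_mapping_eqI)
      fix x
      show "Poly_Mapping.lookup m x = Poly_Mapping.lookup m' x"
      proof (cases "x \<in> Inl ` {..<N} \<union> Inr ` {..<N}")
        case True then show ?thesis using l r by auto
      next
        case False
        hence "x \<notin> Poly_Mapping.keys m" "x \<notin> Poly_Mapping.keys m'" using kN mm(1,2) by auto
        thus ?thesis by (simp add: in_keys_iff)
      qed
    qed
  qed
  define g where "g x = d (the_inv_into K PQ x)" for x
  have "\<forall>w. (\<Sum>x\<in>PQ ` K. g x * w ^ fst x * cnj w ^ snd x) = 0"
  proof
    fix w :: complex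
    have "(\<Sum>x\<in>PQ ` K. g x * w ^ fst x * cnj w ^ snd x) = (\<Sum>m\<in>K. g (PQ m) * w ^ P m * cnj w ^ Q m)"
      by (subst sum.reindex[OF inj]) (simp add: PQ_def)
    also have "\<dots> = (\<Sum>m\<in>K. d m * mon m (\<lambda>j. w ^ (B ^ j)))"
      by (rule sum.cong[OF refl]) (simp add: g_def the_inv_into_f_f[OF inj] mon_kron[OF kN] P_def Q_def mult.assoc)
    also have "\<dots> = 0" using z by blast
    finally show "(\<Sum>x\<in>PQ ` K. g x * w ^ fst x * cnj w ^ snd x) = 0" .
  qed
  from biv_poly[OF finite_imageI[OF fin] this imageI[OF m0]]
  show ?thesis by (simp add: g_def the_inv_into_f_f[OF inj m0])
qed

definition Vs :: "nat \<Rightarrow> (nat + nat) set" where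
  "Vs n = Inl ` {..<n} \<union> Inr ` {..<n}"

lemma finite_Vs[simp]: "finite (Vs n)" by (simp add: Vs_def)

lemma Vs_iff: "x \<in> Vs n \<longleftrightarrow> var_idx x < n"
  by (cases x) (auto simp: Vs_def var_idx_def)

definition cv :: "(nat \<Rightarrow> nat \<Rightarrow> int) \<Rightarrow> nat \<Rightarrow> (nat \<Rightarrow> complex) \<Rightarrow> nat + nat \<Rightarrow> complex" where
  "cv A l t x = (case x of Inl j \<Rightarrow> tchar A l t j | Inr j \<Rightarrow> cnj (tchar A l t j))"

definition chi :: "(nat \<Rightarrow> nat \<Rightarrow> int) \<Rightarrow> nat \<Rightarrow> (nat \<Rightarrow> complex) \<Rightarrow> ((nat + nat) \<Rightarrow>\<^sub>0 nat) \<Rightarrow> complex" where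
  "chi A l t m = (\<Prod>x\<in>Poly_Mapping.keys m. cv A l t x ^ Poly_Mapping.lookup m x)"

definition wt :: "(nat \<Rightarrow> nat \<Rightarrow> int) \<Rightarrow> nat \<Rightarrow> ((nat + nat) \<Rightarrow>\<^sub>0 nat) \<Rightarrow> nat \<Rightarrow> int" where
  "wt A n m i = (\<Sum>j<n. A i j * (int (Poly_Mapping.lookup m (Inl j)) - int (Poly_Mapping.lookup m (Inr j))))"

lemma var_val_act: "var_val (act A l t z) x = cv A l t x * var_val z x"
  by (cases x) (auto simp: var_val_def cv_def act_def)

lemma mon_act: "mon m (act A l t z) = chi A l t m * mon m z"
  by (simp add: mon_def chi_def var_val_act power_mult_distrib prod.distrib)

lemma power_int_sum:
  fixes x :: "'a::field"
  assumes "x \<noteq> 0"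
  shows "x powi (\<Sum>a\<in>S. f a) = (\<Prod>a\<in>S. x powi f a)"
  by (induction S rule: infinite_finite_induct) (auto simp: power_int_add assms)

lemma chi_torus:
  assumes t: "in_torus l t" and k: "Poly_Mapping.keys m \<subseteq> Vs n"
  shows "chi A l t m = (\<Prod>i<l. t i powi wt A n m i)"
proof -
  have t0: "t i \<noteq> 0" if "i < l" for i using t that by (auto simp: in_torus_def)
  have ct: "cnj (t i) = inverse (t i)" if "i < l" for i
  proof -
    have "t i * cnj (t i) = 1" using t that by (simp add: complex_mult_cnj cmod_def in_torus_def)
    thus ?thesis using t0[OF that] by (simp add: field_simps)
  qed
  define c where "c x i = int (Poly_Mapping.lookup m x) * (case x of Inl j \<Rightarrow> A i j | Inr j \<Rightarrow> - A i j)" for x i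
  have cvp: "cv A l t x ^ Poly_Mapping.lookup m x = (\<Prod>i<l. t i powi c x i)" for x
  proof (cases x)
    case (Inl j)
    have "cv A l t x ^ Poly_Mapping.lookup m x = (\<Prod>i<l. (t i powi A i j) ^ Poly_Mapping.lookup m x)"
      by (simp add: Inl cv_def tchar_def prod_power_distrib)
    also have "\<dots> = (\<Prod>i<l. t i powi c x i)"
      by (simp add: Inl c_def power_int_power' mult.commute)
    finally show ?thesis .
  next
    case (Inr j)
    have "cv A l t x ^ Poly_Mapping.lookup m x = (\<Prod>i<l. (cnj (t i) powi A i j) ^ Poly_Mapping.lookup m x)"
      by (simp add: Inr cv_def tchar_def prod_power_distrib complex_cnj_power_int)
    also have "\<dots> = (\<Prod>i<l. (t i powi (- A i j)) ^ Poly_Mapping.lookup m x)"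
      by (rule prod.cong[OF refl]) (simp add: ct power_int_inverse power_int_minus)
    also have "\<dots> = (\<Prod>i<l. t i powi c x i)"
      by (simp add: Inr c_def power_int_power' mult.commute)
    finally show ?thesis .
  qed
  have "chi A l t m = (\<Prod>x\<in>Vs n. cv A l t x ^ Poly_Mapping.lookup m x)"
    unfolding chi_def by (rule prod.mono_neutral_left[OF finite_Vs k]) (auto simp: in_keys_iff)
  also have "\<dots> = (\<Prod>x\<in>Vs n. \<Prod>i<l. t i powi c x i)" by (simp add: cvp)
  also have "\<dots> = (\<Prod>i<l. \<Prod>x\<in>Vs n. t i powi c x i)" by (rule prod.swap)
  also have "\<dots> = (\<Prod>i<l. t i powi (\<Sum>x\<in>Vs n. c x i))"
    by (rule prod.cong[OF refl]) (simp add: power_int_sum t0)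
  also have "\<dots> = (\<Prod>i<l. t i powi wt A n m i)"
  proof (rule prod.cong[OF refl])
    fix i
    have "(\<Sum>x\<in>Vs n. c x i) = (\<Sum>x\<in>Inl ` {..<n}. c x i) + (\<Sum>x\<in>Inr ` {..<n}. c x i)"
      unfolding Vs_def by (rule sum.union_disjoint) auto
    also have "\<dots> = wt A n m i"
      by (simp add: sum.reindex c_def wt_def algebra_simps sum_subtractf sum_negf)
    finally show "t i powi (\<Sum>x\<in>Vs n. c x i) = t i powi wt A n m i" by simp
  qed
  finally show ?thesis .
qed

lemma mon_invariant:
  assumes t: "in_torus l t" and k: "Poly_Mapping.keys m \<subseteq> Vs n" and w: "\<forall>i<l. wt A n m i = 0"
  shows "mon m (act A l t z) = mon m z"
  using chi_torus[OF t k, of A] w by (simp add: mon_act)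

lemma circle_pow_int:
  assumes "\<forall>u::complex. cmod u = 1 \<longrightarrow> u powi w = 1"
  shows "w = 0"
proof (rule ccontr)
  assume w0: "w \<noteq> 0"
  define k where "k = nat \<bar>w\<bar>"
  have k0: "k \<noteq> 0" using w0 by (simp add: k_def)
  have "\<forall>u\<in>{u::complex. cmod u = 1}. u ^ k = 1"
  proof
    fix u :: complex assume "u \<in> {u. cmod u = 1}"
    hence u: "cmod u = 1" by simp
    hence "u powi w = 1" using assms by blast
    show "u ^ k = 1"
    proof (cases "w > 0")
      case True
      hence "u powi w = u ^ k" by (simp add: k_def power_int_def)
      thus ?thesis using \<open>u powi w = 1\<close> by simp
    next
      case False
      hence "w = - int k" using w0 by (simp add: k_def)
      hence "u powi w = inverse (u ^ k)" by (simp add: power_int_minus)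
      thus ?thesis using \<open>u powi w = 1\<close> by (metis inverse_1 inverse_inverse_eq)
    qed
  qed
  hence "\<forall>x\<in>{u::complex. cmod u = 1}. (\<Sum>j\<in>{0,k}. (if j = 0 then -1 else 1) * x ^ j) = 0"
    using k0 by auto
  from uni_poly[OF _ circle_infinite this] show False by auto
qed

lemma wt_zero_from_chi:
  assumes "i < l" and k: "Poly_Mapping.keys m \<subseteq> Vs n" and c: "\<forall>t. in_torus l t \<longrightarrow> chi A l t m = 1"
  shows "wt A n m i = 0"
proof (rule circle_pow_int, intro allI impI)
  fix u :: complex assume u: "cmod u = 1"
  define t where "t = (\<lambda>i'. if i' = i then u else 1)"
  have tt: "in_torus l t" using u by (simp add: in_torus_def t_def)
  have "chi A l t m = (\<Prod>i'<l. t i' powi wt A n m i')" by (rule chi_torus[OF tt k])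
  also have "\<dots> = (\<Prod>i'\<in>{i}. t i' powi wt A n m i')"
    by (rule prod.mono_neutral_right) (auto simp: t_def assms(1))
  also have "\<dots> = u powi wt A n m i" by (simp add: t_def)
  finally show "u powi wt A n m i = 1" using c tt by simp
qed

lemma sum_split_add: fixes l k :: nat shows "(\<Sum>j<l+k. f j) = (\<Sum>j<l. f j) + (\<Sum>j<k. f (l + j)::'a::comm_monoid_add)"
  by (induction k) (auto simp: add.assoc)

definition Dm :: "((nat + nat) \<Rightarrow>\<^sub>0 nat) \<Rightarrow> nat \<Rightarrow> int" where
  "Dm m j = int (Poly_Mapping.lookup m (Inl j)) - int (Poly_Mapping.lookup m (Inr j))"

definition Sm :: "nat \<Rightarrow> nat \<Rightarrow> ((nat + nat) \<Rightarrow>\<^sub>0 nat) \<Rightarrow> int" where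
  "Sm l k m = (\<Sum>j<k. Dm m (l + j))"

lemma wt_typeI:
  assumes "i < l"
  shows "wt (typeI a nv l) (l + k) m i = - int (a i) * Dm m i + int (nv i) * Sm l k m"
proof -
  have "wt (typeI a nv l) (l + k) m i = (\<Sum>j<l. typeI a nv l i j * Dm m j) + (\<Sum>j<k. typeI a nv l i (l + j) * Dm m (l + j))"
    unfolding wt_def Dm_def by (rule sum_split_add)
  also have "(\<Sum>j<l. typeI a nv l i j * Dm m j) = (\<Sum>j<l. if j = i then - int (a i) * Dm m j else 0)"
    by (rule sum.cong) (auto simp: typeI_def)
  also have "\<dots> = - int (a i) * Dm m i" using assms by simp
  also have "(\<Sum>j<k. typeI a nv l i (l + j) * Dm m (l + j)) = int (nv i) * Sm l k m"
    by (simp add: typeI_def Sm_def sum_distrib_left)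
  finally show ?thesis .
qed

lemma wt_add: "wt A n (g + h) i = wt A n g i + wt A n h i"
  unfolding wt_def lookup_add sum.distrib[symmetric] by (rule sum.cong) (auto simp: algebra_simps)

lemma choose_s:
  fixes u :: "nat \<Rightarrow> nat"
  assumes "\<alpha> \<le> (\<Sum>j<k. u j)"
  shows "\<exists>s. (\<forall>j\<ge>k. s j = 0) \<and> (\<forall>j. s j \<le> u j) \<and> (\<Sum>j<k. s j) = \<alpha>"
  using assms
proof (induction k arbitrary: \<alpha>)
  case 0 then show ?case by (intro exI[of _ "\<lambda>_. 0"]) auto
next
  case (Suc k)
  show ?case
  proof (cases "\<alpha> \<le> (\<Sum>j<k. u j)")
    case True
    then obtain s where s: "\<forall>j\<ge>k. s j = 0" "\<forall>j. s j \<le> u j" "(\<Sum>j<k. s j) = \<alpha>" using Suc.IH by blast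
    thus ?thesis by (intro exI[of _ s]) auto
  next
    case False
    define s where "s j = (if j < k then u j else if j = k then \<alpha> - (\<Sum>j<k. u j) else 0)" for j
    have "(\<Sum>j<Suc k. s j) = (\<Sum>j<k. u j) + (\<alpha> - (\<Sum>j<k. u j))" by (simp add: s_def)
    also have "\<dots> = \<alpha>" using False by simp
    finally have "(\<Sum>j<Suc k. s j) = \<alpha>" .
    moreover have "\<forall>j. s j \<le> u j" using Suc.prems by (auto simp: s_def)
    moreover have "\<forall>j\<ge>Suc k. s j = 0" by (auto simp: s_def)
    ultimately show ?thesis by blast
  qed
qed

lemma Var_pow: "Var x ^ e = Poly_Mapping.single (Poly_Mapping.single x e) 1"
proof (induction e)
  case 0 then show ?case by simp
next
  case (Suc e)
  have "Var x ^ Suc e = Var x * Var x ^ e" by simp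
  also have "\<dots> = Poly_Mapping.single (Poly_Mapping.single x 1 + Poly_Mapping.single x e) 1"
    by (simp only: Suc.IH) (simp add: Var_def mult_single)
  also have "Poly_Mapping.single x 1 + Poly_Mapping.single x e = Poly_Mapping.single x (Suc e)"
    by (simp add: single_add[symmetric])
  finally show ?case .
qed

lemma prod_single: "(\<Prod>i\<in>I. Poly_Mapping.single (f i) (1::complex)) = Poly_Mapping.single (\<Sum>i\<in>I. f i) 1"
  by (induction I rule: infinite_finite_induct) (auto simp: mult_single)

definition qe :: "(nat \<Rightarrow> nat + nat) \<Rightarrow> (nat \<Rightarrow> nat) \<Rightarrow> (nat \<Rightarrow> nat) \<Rightarrow> nat \<Rightarrow> nat \<Rightarrow> (nat \<Rightarrow> nat) \<Rightarrow> (nat + nat) \<Rightarrow>\<^sub>0 nat" where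
  "qe side a nv l k s = (\<Sum>i<l. Poly_Mapping.single (side i) (mA a nv l i)) + (\<Sum>i<k. Poly_Mapping.single (side (l + i)) (s i))"

lemma qmono_single: "qmono side a nv l k s = Poly_Mapping.single (qe side a nv l k s) 1"
  by (simp add: qmono_def qe_def Var_pow prod_single mult_single)

lemma lookup_qe:
  assumes inj: "inj side" and disj: "\<forall>i j. side i \<noteq> oside j"
  shows "Poly_Mapping.lookup (qe side a nv l k s) (side j) =
           (if j < l then mA a nv l j else if j < l + k then s (j - l) else 0)"
    and "Poly_Mapping.lookup (qe side a nv l k s) (oside j) = 0"
proof -
  have sj: "side i = side j \<longleftrightarrow> i = j" for i using inj by (auto dest: injD)
  have "Poly_Mapping.lookup (qe side a nv l k s) (side j) =
      (\<Sum>i<l. if i = j then mA a nv l i else 0) + (\<Sum>i<k. if l + i = j then s i else 0)"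
    by (simp add: qe_def lookup_add lookup_sum lookup_single when_def sj)
  also have "\<dots> = (if j < l then mA a nv l j else if j < l + k then s (j - l) else 0)"
  proof -
    have "(\<Sum>i<k. if l + i = j then s i else 0) = (\<Sum>i<k. if i = j - l \<and> l \<le> j then s i else 0)"
      by (rule sum.cong) auto
    also have "\<dots> = (if l \<le> j \<and> j - l < k then s (j - l) else 0)"
      by (cases "l \<le> j") auto
    finally show ?thesis by auto
  qed
  finally show "Poly_Mapping.lookup (qe side a nv l k s) (side j) =
           (if j < l then mA a nv l j else if j < l + k then s (j - l) else 0)" .
  show "Poly_Mapping.lookup (qe side a nv l k s) (oside j) = 0"
    using disj by (simp add: qe_def lookup_add lookup_sum lookup_single when_def)
qed

lemma faithful_coprime:
  assumes f: "faithful (typeI a nv l) l n" and i: "i < l" and a: "a i > 0"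
  shows "coprime (a i) (nv i)"
proof (rule ccontr)
  assume nc: "\<not> coprime (a i) (nv i)"
  define d where "d = gcd (a i) (nv i)"
  have "d \<noteq> 0" using a by (simp add: d_def)
  moreover have "d \<noteq> 1" using nc by (simp add: d_def coprime_iff_gcd_eq_1)
  ultimately have d2: "d \<ge> 2" by linarith
  define \<zeta> where "\<zeta> = cis (2 * pi / real d)"
  have z1: "cmod \<zeta> = 1" by (simp add: \<zeta>_def norm_cis)
  have zd: "\<zeta> ^ d = 1"
  proof -
    have e: "real d * (2 * pi / real d) = 2 * pi" using d2 by simp
    have "\<zeta> ^ d = cis (real d * (2 * pi / real d))" unfolding \<zeta>_def by (rule Complex.DeMoivre)
    also have "\<dots> = 1" unfolding e by (rule cis_2pi)
    finally show ?thesis .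
  qed
  have zne: "\<zeta> \<noteq> 1"
  proof
    assume "\<zeta> = 1"
    hence "cos (2 * pi / real d) = cos 0" by (metis \<zeta>_def cis.sel(1) cos_zero one_complex.sel(1))
    moreover have "0 \<le> 2 * pi / real d" using d2 by simp
    moreover have "2 * pi / real d \<le> pi"
    proof -
      have "2 * pi \<le> pi * real d" using d2 pi_gt_zero
        by (metis mult.commute mult_left_mono of_nat_le_iff of_nat_numeral pi_ge_zero)
      thus ?thesis using d2 by (simp add: divide_le_eq)
    qed
    ultimately have "2 * pi / real d = 0" using cos_inj_pi[of "2*pi/real d" 0] by (simp add: pi_ge_zero)
    thus False using d2 by simp
  qed
  have pw: "\<zeta> powi (int d * q) = 1" for q
    by (simp add: power_int_mult zd)
  define t where "t = (\<lambda>i'. if i' = i then \<zeta> else 1)"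
  have tt: "in_torus l t" using z1 by (simp add: in_torus_def t_def)
  have tc: "tchar (typeI a nv l) l t j = \<zeta> powi typeI a nv l i j" for j
  proof -
    have "tchar (typeI a nv l) l t j = (\<Prod>i'<l. if i' = i then \<zeta> powi typeI a nv l i j else 1)"
      unfolding tchar_def by (rule prod.cong) (auto simp: t_def)
    also have "\<dots> = \<zeta> powi typeI a nv l i j" using i by simp
    finally show ?thesis .
  qed
  have dv: "int d dvd typeI a nv l i j" for j
    by (auto simp: typeI_def d_def)
  have "\<forall>j<n. tchar (typeI a nv l) l t j = 1"
  proof (intro allI impI)
    fix j
    obtain q where "typeI a nv l i j = int d * q" using dv[of j] by (auto elim: dvdE)
    thus "tchar (typeI a nv l) l t j = 1" by (simp add: tc pw)
  qed
  hence "t i = 1" using f tt i by (auto simp: faithful_def)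
  thus False using zne by (simp add: t_def)
qed

lemma adv: "i < l \<Longrightarrow> a i dvd alphaA a l"
  unfolding alphaA_def by (rule dvd_Lcm) auto

lemma alpha_pos: assumes "\<forall>i<l. a i > 0" shows "alphaA a l > 0"
proof -
  have "0 \<notin> a ` {..<l}" using assms by (auto simp: image_iff)
  moreover have "finite (a ` {..<l})" by simp
  ultimately have "Lcm (a ` {..<l}) \<noteq> 0" using Lcm_0_iff_nat[of "a ` {..<l}"] by blast
  thus ?thesis unfolding alphaA_def by (metis gr0I)
qed

lemma mA_mul: "i < l \<Longrightarrow> a i * mA a nv l i = nv i * alphaA a l"
  unfolding mA_def using adv[of i l a]
  by (metis dvd_div_mult_self dvd_mult dvd_mult_div_cancel mult.commute)

definition sd :: "bool \<Rightarrow> nat \<Rightarrow> nat + nat" where "sd b = (if b then Inl else Inr)"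
definition od :: "bool \<Rightarrow> nat \<Rightarrow> nat + nat" where "od b = (if b then Inr else Inl)"

lemma inj_sd: "inj (sd b)" by (cases b) (auto simp: sd_def inj_def)
lemma disj_sd: "\<forall>i j. sd b i \<noteq> od b j" by (cases b) (auto simp: sd_def od_def)
lemma cover_sd: "x = sd b (var_idx x) \<or> x = od b (var_idx x)"
  by (cases b; cases x) (auto simp: sd_def od_def var_idx_def)

definition Db :: "bool \<Rightarrow> ((nat + nat) \<Rightarrow>\<^sub>0 nat) \<Rightarrow> nat \<Rightarrow> int" where
  "Db b m j = int (Poly_Mapping.lookup m (sd b j)) - int (Poly_Mapping.lookup m (od b j))"

lemma Db_Dm: "Db b m j = (if b then Dm m j else - Dm m j)"
  by (cases b) (auto simp: Db_def Dm_def sd_def od_def)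

lemma wt_Db:
  assumes "i < l"
  shows "wt (typeI a nv l) (l + k) m i = (if b then 1 else -1) * (- int (a i) * Db b m i + int (nv i) * (\<Sum>j<k. Db b m (l + j)))"
  using wt_typeI[OF assms, of a nv k m] by (cases b) (auto simp: Db_Dm Sm_def sum_negf)

lemma extract_q:
  assumes apos: "\<forall>i<l. a i > 0" and cop: "\<forall>i<l. coprime (a i) (nv i)"
    and w: "\<forall>i<l. wt (typeI a nv l) (l + k) m i = 0"
    and S: "(\<Sum>j<k. Db b m (l + j)) > 0"
  shows "\<exists>s\<in>svecs k (alphaA a l). \<forall>x. Poly_Mapping.lookup (qe (sd b) a nv l k s) x \<le> Poly_Mapping.lookup m x"
proof -
  define SS where "SS = (\<Sum>j<k. Db b m (l + j))"
  define \<alpha> where "\<alpha> = alphaA a l"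
  have e1: "int (a i) * Db b m i = int (nv i) * SS" if "i < l" for i
    using w that wt_Db[OF that, of a nv k m b] by (cases b) (auto simp: SS_def)
  have d1: "a i dvd nat SS" if "i < l" for i
  proof -
    have "int (a i) dvd int (nv i) * SS" using e1[OF that] by (metis dvd_triv_left)
    hence "int (a i) dvd SS" using cop that by (simp add: coprime_dvd_mult_right_iff coprime_int_iff)
    thus ?thesis using S SS_def by (metis int_dvd_int_iff int_nat_eq less_le_not_le)
  qed
  have "\<alpha> dvd nat SS" unfolding \<alpha>_def alphaA_def by (rule Lcm_least) (auto intro: d1)
  hence aS: "int \<alpha> \<le> SS" using S SS_def by (metis dvd_imp_le int_nat_eq nat_le_iff zero_less_nat_eq order.strict_iff_not nat_int)
  have ge: "mA a nv l i \<le> Poly_Mapping.lookup m (sd b i)" if "i < l" for i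
  proof -
    have "int (a i) * int (mA a nv l i) = int (nv i) * int \<alpha>"
      using mA_mul[OF that, of a nv] unfolding \<alpha>_def by (metis of_nat_mult)
    also have "\<dots> \<le> int (nv i) * SS" using aS by (simp add: mult_left_mono)
    also have "\<dots> = int (a i) * Db b m i" using e1[OF that] by simp
    finally have "int (mA a nv l i) \<le> Db b m i" using apos that by (simp add: mult_le_cancel_left)
    thus ?thesis unfolding Db_def by linarith
  qed
  have "int \<alpha> \<le> (\<Sum>j<k. int (Poly_Mapping.lookup m (sd b (l + j))))"
  proof -
    have "SS = (\<Sum>j<k. int (Poly_Mapping.lookup m (sd b (l + j)))) - (\<Sum>j<k. int (Poly_Mapping.lookup m (od b (l + j))))"
      unfolding SS_def Db_def by (simp add: sum_subtractf)
    moreover have "(\<Sum>j<k. int (Poly_Mapping.lookup m (od b (l + j)))) \<ge> 0" by (rule sum_nonneg) simp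
    ultimately show ?thesis using aS by linarith
  qed
  hence "\<alpha> \<le> (\<Sum>j<k. Poly_Mapping.lookup m (sd b (l + j)))" by (simp flip: of_nat_sum)
  then obtain s where s: "\<forall>j\<ge>k. s j = 0" "\<forall>j. s j \<le> Poly_Mapping.lookup m (sd b (l + j))" "(\<Sum>j<k. s j) = \<alpha>"
    using choose_s by blast
  have sv: "s \<in> svecs k (alphaA a l)" using s by (simp add: svecs_def \<alpha>_def)
  have "\<forall>x. Poly_Mapping.lookup (qe (sd b) a nv l k s) x \<le> Poly_Mapping.lookup m x"
  proof
    fix x
    consider "x = sd b (var_idx x)" | "x = od b (var_idx x)" using cover_sd by blast
    thus "Poly_Mapping.lookup (qe (sd b) a nv l k s) x \<le> Poly_Mapping.lookup m x"
    proof cases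
      case 1
      define j where "j = var_idx x"
      have "Poly_Mapping.lookup (qe (sd b) a nv l k s) x = (if j < l then mA a nv l j else if j < l + k then s (j - l) else 0)"
        using 1 lookup_qe(1)[OF inj_sd disj_sd, of b a nv l k s j] by (simp add: j_def)
      also have "\<dots> \<le> Poly_Mapping.lookup m x"
      proof -
        have "j < l \<Longrightarrow> mA a nv l j \<le> Poly_Mapping.lookup m x" using ge[of j] 1 unfolding j_def by metis
        moreover have "\<not> j < l \<Longrightarrow> s (j - l) \<le> Poly_Mapping.lookup m x"
          using s(2)[rule_format, of "j - l"] 1 by (simp add: j_def)
        ultimately show ?thesis by auto
      qed
      finally show ?thesis .
    next
      case 2
      thus ?thesis using lookup_qe(2)[OF inj_sd disj_sd, of b a nv l k s "var_idx x"] by simp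
    qed
  qed
  with sv show ?thesis by blast
qed

lemma wt_qe:
  assumes apos: "\<forall>i<l. a i > 0" and s: "s \<in> svecs k (alphaA a l)" and i: "i < l"
  shows "wt (typeI a nv l) (l + k) (qe (sd b) a nv l k s) i = 0"
proof -
  let ?q = "qe (sd b) a nv l k s"
  have Dq: "Db b ?q j = int (if j < l then mA a nv l j else if j < l + k then s (j - l) else 0)" for j
    unfolding Db_def using lookup_qe[OF inj_sd disj_sd, of b a nv l k s j] by simp
  have "(\<Sum>j<k. Db b ?q (l + j)) = (\<Sum>j<k. int (s j))" by (simp add: Dq)
  also have "\<dots> = int (alphaA a l)" using s by (simp add: svecs_def flip: of_nat_sum)
  finally have "(\<Sum>j<k. Db b ?q (l + j)) = int (alphaA a l)" .
  moreover have "Db b ?q i = int (mA a nv l i)" using i by (simp add: Dq)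
  moreover have "int (a i) * int (mA a nv l i) = int (nv i) * int (alphaA a l)"
    using mA_mul[OF i, of a nv] by (metis of_nat_mult)
  ultimately show ?thesis using wt_Db[OF i, of a nv k ?q b] by simp
qed

abbreviation GG where "GG a nv l k \<equiv> gens_r l \<union> gens_p l k \<union> gens_q a nv l k \<union> gens_qbar a nv l k"

definition degm :: "((nat + nat) \<Rightarrow>\<^sub>0 nat) \<Rightarrow> nat \<Rightarrow> nat" where
  "degm m n = (\<Sum>x\<in>Vs n. Poly_Mapping.lookup m x)"

lemma wt_Db1: "wt A n m i = (\<Sum>j<n. A i j * Db True m j)"
  by (simp add: wt_def Db_def sd_def od_def)

lemma single_mult_gen: "Poly_Mapping.single g (1::complex) \<in> gen_alg G \<Longrightarrow> Poly_Mapping.single h 1 \<in> gen_alg G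
   \<Longrightarrow> Poly_Mapping.single (g + h) 1 \<in> gen_alg G"
  using gen_alg.mult[of "Poly_Mapping.single g 1" G "Poly_Mapping.single h 1"] by (simp add: mult_single)

lemma Var_mult: "Var x * Var y = Poly_Mapping.single (Poly_Mapping.single x 1 + Poly_Mapping.single y 1) 1"
  by (simp add: Var_def mult_single)

lemma lookup_pair: "Poly_Mapping.lookup (Poly_Mapping.single x (1::nat) + Poly_Mapping.single y 1) z =
   (if z = x then 1 else 0) + (if z = y then 1 else 0)"
  by (simp add: lookup_add lookup_single when_def)

lemma mono_gen:
  assumes apos: "\<forall>i<l. a i > 0" and cop: "\<forall>i<l. coprime (a i) (nv i)"
  shows "Poly_Mapping.keys m \<subseteq> Vs (l + k) \<Longrightarrow> \<forall>i<l. wt (typeI a nv l) (l + k) m i = 0 \<Longrightarrow>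
    Poly_Mapping.single m 1 \<in> gen_alg (GG a nv l k)"
proof (induction "degm m (l + k)" arbitrary: m rule: less_induct)
  case less
  note km = less.prems(1) and wm = less.prems(2)
  let ?A = "typeI a nv l"
  have peel: "Poly_Mapping.single m 1 \<in> gen_alg (GG a nv l k)"
    if le: "\<forall>x. Poly_Mapping.lookup g x \<le> Poly_Mapping.lookup m x" and g0: "g \<noteq> 0"
      and gg: "Poly_Mapping.single g 1 \<in> gen_alg (GG a nv l k)" and wg: "\<forall>i<l. wt ?A (l + k) g i = 0" for g
  proof -
    define m' where "m' = m - g"
    have lm': "Poly_Mapping.lookup m' x = Poly_Mapping.lookup m x - Poly_Mapping.lookup g x" for x
      by (simp add: m'_def lookup_minus)
    have mg: "m = g + m'"
      by (rule poly_mapping_eqI) (simp add: lookup_add lm' le[rule_format] )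
    have km': "Poly_Mapping.keys m' \<subseteq> Vs (l + k)"
      using km by (auto simp: in_keys_iff lm')
    have wm': "\<forall>i<l. wt ?A (l + k) m' i = 0"
      using wm wg by (simp add: mg wt_add)
    have dsplit: "degm m (l + k) = degm g (l + k) + degm m' (l + k)"
      by (subst mg) (simp add: degm_def lookup_add sum.distrib)
    obtain x where x: "Poly_Mapping.lookup g x \<noteq> 0" using g0 by (metis poly_mapping_eqI lookup_zero)
    have "x \<in> Vs (l + k)" using km le[rule_format, of x] x by (auto simp: in_keys_iff)
    hence "Poly_Mapping.lookup g x \<le> degm g (l + k)" unfolding degm_def by (intro member_le_sum) auto
    hence "degm m' (l + k) < degm m (l + k)" using dsplit x by linarith
    hence "Poly_Mapping.single m' 1 \<in> gen_alg (GG a nv l k)" using less.hyps km' wm' by blast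
    thus ?thesis using single_mult_gen[OF gg] mg by simp
  qed
  define S where "S = (\<Sum>j<k. Db True m (l + j))"
  have qcase: "Poly_Mapping.single m 1 \<in> gen_alg (GG a nv l k)" if Sb: "(\<Sum>j<k. Db b m (l + j)) > 0" for b
  proof -
    obtain s where s: "s \<in> svecs k (alphaA a l)"
      and le: "\<forall>x. Poly_Mapping.lookup (qe (sd b) a nv l k s) x \<le> Poly_Mapping.lookup m x"
      using extract_q[OF apos cop wm Sb] by blast
    have g0: "qe (sd b) a nv l k s \<noteq> 0"
    proof
      assume z: "qe (sd b) a nv l k s = 0"
      have "s j = 0" if "j < k" for j
        using lookup_qe(1)[OF inj_sd disj_sd, of b a nv l k s "l + j"] z that by simp
      hence "(\<Sum>j<k. s j) = 0" by simp
      thus False using s alpha_pos[OF apos] by (simp add: svecs_def)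
    qed
    have gg: "Poly_Mapping.single (qe (sd b) a nv l k s) 1 \<in> gen_alg (GG a nv l k)"
    proof (rule gen_alg.gen)
      have "qmono (sd b) a nv l k s \<in> (if b then gens_q a nv l k else gens_qbar a nv l k)"
        using s by (cases b) (auto simp: gens_q_def gens_qbar_def sd_def)
      thus "Poly_Mapping.single (qe (sd b) a nv l k s) 1 \<in> GG a nv l k"
        by (cases b) (auto simp: qmono_single)
    qed
    show ?thesis by (rule peel[OF le g0 gg]) (auto intro: wt_qe[OF apos s])
  qed
  consider "S > 0" | "S < 0" | "S = 0" by linarith
  thus ?case
  proof cases
    case 1 thus ?thesis using qcase[of True] S_def by simp
  next
    case 2
    have "(\<Sum>j<k. Db False m (l + j)) = - S" by (simp add: S_def Db_Dm sum_negf)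
    thus ?thesis using qcase[of False] 2 by simp
  next
    case 3
    have eqi: "Poly_Mapping.lookup m (Inl i) = Poly_Mapping.lookup m (Inr i)" if "i < l" for i
    proof -
      have "- int (a i) * Db True m i = 0" using wm that wt_Db[OF that, of a nv k m True] 3 S_def by simp
      moreover have "a i > 0" using apos that by blast
      ultimately have "Db True m i = 0" by simp
      thus ?thesis by (simp add: Db_def sd_def od_def)
    qed
    have Seq: "(\<Sum>j<k. int (Poly_Mapping.lookup m (Inl (l + j)))) = (\<Sum>j<k. int (Poly_Mapping.lookup m (Inr (l + j))))"
      using 3 by (simp add: S_def Db_def sd_def od_def sum_subtractf)
    show ?thesis
    proof (cases "\<exists>i<l. Poly_Mapping.lookup m (Inl i) > 0")
      case True
      then obtain i where i: "i < l" "Poly_Mapping.lookup m (Inl i) > 0" by blast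
      define g where "g = Poly_Mapping.single (Inl i) (1::nat) + Poly_Mapping.single (Inr i) 1"
      show ?thesis
      proof (rule peel[of g])
        show "\<forall>x. Poly_Mapping.lookup g x \<le> Poly_Mapping.lookup m x"
          using i eqi[OF i(1)] unfolding g_def lookup_pair by auto
        show "g \<noteq> 0"
        proof
          assume "g = 0" hence "Poly_Mapping.lookup g (Inl i) = 0" by simp
          thus False unfolding g_def lookup_pair by simp
        qed
        show "Poly_Mapping.single g 1 \<in> gen_alg (GG a nv l k)"
          by (rule gen_alg.gen) (auto simp: gens_r_def Var_mult g_def i(1))
        show "\<forall>i<l. wt ?A (l + k) g i = 0"
          unfolding g_def wt_Db1 Db_def sd_def od_def lookup_pair by simp
      qed
    next
      case False
      note F1 = False
      show ?thesis
      proof (cases "\<exists>j<k. Poly_Mapping.lookup m (Inl (l + j)) > 0")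
        case True
        then obtain j where j: "j < k" "Poly_Mapping.lookup m (Inl (l + j)) > 0" by blast
        have "int (Poly_Mapping.lookup m (Inl (l + j))) \<le> (\<Sum>j<k. int (Poly_Mapping.lookup m (Inl (l + j))))"
          using j(1) by (intro member_le_sum) auto
        hence "(\<Sum>j<k. int (Poly_Mapping.lookup m (Inr (l + j)))) \<noteq> 0" using j(2) Seq by linarith
        then obtain j' where j': "j' < k" "Poly_Mapping.lookup m (Inr (l + j')) > 0"
          by (metis (no_types, lifting) lessThan_iff neq0_conv of_nat_0 sum.neutral)
        define g where "g = Poly_Mapping.single (Inl (l + j)) (1::nat) + Poly_Mapping.single (Inr (l + j')) 1"
        show ?thesis
        proof (rule peel[of g])
          show "\<forall>x. Poly_Mapping.lookup g x \<le> Poly_Mapping.lookup m x"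
            using j j' unfolding g_def lookup_pair by auto
          show "g \<noteq> 0"
          proof
            assume "g = 0" hence "Poly_Mapping.lookup g (Inl (l + j)) = 0" by simp
            thus False unfolding g_def lookup_pair by simp
          qed
          show "Poly_Mapping.single g 1 \<in> gen_alg (GG a nv l k)"
            by (rule gen_alg.gen) (use j j' in \<open>auto simp: gens_p_def Var_mult g_def\<close>)
          show "\<forall>i<l. wt ?A (l + k) g i = 0"
          proof (intro allI impI)
            fix i assume i: "i < l"
            have "Db True g i = 0" using i unfolding Db_def sd_def od_def g_def lookup_pair by simp
            moreover have "(\<Sum>j2<k. Db True g (l + j2)) = (\<Sum>j2<k. (if j2 = j then 1 else 0) - (if j2 = j' then 1 else 0))"
              by (rule sum.cong) (unfold Db_def sd_def od_def g_def lookup_pair, auto)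
            moreover have "\<dots> = 0" using j(1) j'(1) by (simp add: sum_subtractf)
            ultimately show "wt ?A (l + k) g i = 0" using wt_Db[OF i, of a nv k g True] by simp
          qed
        qed
      next
        case False
        note F2 = False
        have z1: "Poly_Mapping.lookup m (Inl j) = 0" if "j < l + k" for j
        proof (cases "j < l")
          case True thus ?thesis using F1 by auto
        next
          case False
          hence "j = l + (j - l)" "j - l < k" using that by auto
          thus ?thesis using F2 by (metis neq0_conv)
        qed
        have "(\<Sum>j<k. int (Poly_Mapping.lookup m (Inr (l + j)))) = 0"
          using Seq z1 by simp
        hence z2: "Poly_Mapping.lookup m (Inr (l + j)) = 0" if "j < k" for j
          using that by (subst (asm) sum_nonneg_eq_0_iff) auto
        have "m = 0"
        proof (rule poly_mapping_eqI)
          fix x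
          show "Poly_Mapping.lookup m x = Poly_Mapping.lookup 0 x"
          proof (cases "x \<in> Vs (l + k)")
            case False thus ?thesis using km by (auto simp: in_keys_iff)
          next
            case True
            then obtain j where jl: "j < l + k" and x: "x = Inl j \<or> x = Inr j" by (auto simp: Vs_def)
            show ?thesis
            proof (cases "x = Inl j")
              case True thus ?thesis using z1[OF jl] by simp
            next
              case False hence xr: "x = Inr j" using x by blast
              show ?thesis
              proof (cases "j < l")
                case True thus ?thesis using eqi[OF True] z1[OF jl] xr by simp
              next
                case False hence "l + (j - l) = j" "j - l < k" using jl by auto
                thus ?thesis using z2[of "j - l"] xr by simp
              qed
            qed
          qed
        qed
        thus ?thesis using gen_alg.const[of 1] by (simp add: Const_def)
      qed
    qed
  qed
qed

lemma gen_alg_sum: "(\<forall>i\<in>I. f i \<in> gen_alg G) \<Longrightarrow> sum f I \<in> gen_alg G"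
proof (induction I rule: infinite_finite_induct)
  case (infinite A) thus ?case using gen_alg.const[of 0 G] by (simp add: Const_def)
next
  case empty thus ?case using gen_alg.const[of 0 G] by (simp add: Const_def)
next
  case (insert x F) thus ?case by (auto intro: gen_alg.add)
qed

lemma single_c_gen: "Poly_Mapping.single m 1 \<in> gen_alg G \<Longrightarrow> Poly_Mapping.single m c \<in> gen_alg G"
  using gen_alg.mult[OF gen_alg.const[of c G], of "Poly_Mapping.single m 1"] by (simp add: Const_def mult_single)

definition invm :: "(nat \<Rightarrow> nat \<Rightarrow> int) \<Rightarrow> nat \<Rightarrow> nat \<Rightarrow> ((nat + nat) \<Rightarrow>\<^sub>0 nat) \<Rightarrow> bool" where
  "invm A l n m \<longleftrightarrow> Poly_Mapping.keys m \<subseteq> Vs n \<and> (\<forall>i<l. wt A n m i = 0)"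

lemma gens_invm:
  assumes apos: "\<forall>i<l. a i > 0" and g: "g \<in> GG a nv l k"
  shows "\<exists>m. g = Poly_Mapping.single m 1 \<and> invm (typeI a nv l) l (l + k) m"
proof -
  let ?A = "typeI a nv l"
  have kp: "Poly_Mapping.keys (Poly_Mapping.single x (1::nat) + Poly_Mapping.single y 1) \<subseteq> {x, y}" for x y
    using keys_add[of "Poly_Mapping.single x (1::nat)" "Poly_Mapping.single y 1"] by auto
  consider (r) i where "i < l" "g = Var (Inl i) * Var (Inr i)"
    | (p) i j where "i < k" "j < k" "g = Var (Inl (l + i)) * Var (Inr (l + j))"
    | (q) b s where "s \<in> svecs k (alphaA a l)" "g = qmono (sd b) a nv l k s"
  proof -
    have "g \<in> gens_r l \<or> g \<in> gens_p l k \<or> g \<in> gens_q a nv l k \<or> g \<in> gens_qbar a nv l k"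
      using g by blast
    moreover have "sd True = Inl" "sd False = Inr" by (auto simp: sd_def)
    ultimately show ?thesis using that unfolding gens_r_def gens_p_def gens_q_def gens_qbar_def
      by (elim disjE) (blast, blast, (metis image_iff)+)
  qed
  thus ?thesis
  proof cases
    case r
    define m where "m = Poly_Mapping.single (Inl i) (1::nat) + Poly_Mapping.single (Inr i) 1"
    have "Poly_Mapping.keys m \<subseteq> Vs (l + k)" using kp[of "Inl i" "Inr i"] r(1) by (auto simp: m_def Vs_def)
    moreover have "\<forall>i<l. wt ?A (l + k) m i = 0"
      unfolding m_def wt_Db1 Db_def sd_def od_def lookup_pair by simp
    ultimately show ?thesis using r(2) by (auto simp: invm_def Var_mult m_def)
  next
    case p
    define m where "m = Poly_Mapping.single (Inl (l + i)) (1::nat) + Poly_Mapping.single (Inr (l + j)) 1"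
    have "Poly_Mapping.keys m \<subseteq> Vs (l + k)" using kp[of "Inl (l + i)" "Inr (l + j)"] p(1,2) by (auto simp: m_def Vs_def)
    moreover have "\<forall>i'<l. wt ?A (l + k) m i' = 0"
    proof (intro allI impI)
      fix i' assume i': "i' < l"
      have "Db True m i' = 0" using i' unfolding Db_def sd_def od_def m_def lookup_pair by simp
      moreover have "(\<Sum>j2<k. Db True m (l + j2)) = (\<Sum>j2<k. (if j2 = i then 1 else 0) - (if j2 = j then 1 else 0))"
        by (rule sum.cong) (unfold Db_def sd_def od_def m_def lookup_pair, auto)
      moreover have "\<dots> = 0" using p(1,2) by (simp add: sum_subtractf)
      ultimately show "wt ?A (l + k) m i' = 0" using wt_Db[OF i', of a nv k m True] by simp
    qed
    ultimately show ?thesis using p(3) by (auto simp: invm_def Var_mult m_def)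
  next
    case q
    define m where "m = qe (sd b) a nv l k s"
    have "Poly_Mapping.keys m \<subseteq> Vs (l + k)"
    proof
      fix x assume x: "x \<in> Poly_Mapping.keys m"
      consider "x = sd b (var_idx x)" | "x = od b (var_idx x)" using cover_sd by blast
      thus "x \<in> Vs (l + k)"
      proof cases
        case 1
        have "Poly_Mapping.lookup m x \<noteq> 0" using x by (simp add: in_keys_iff)
        hence "var_idx x < l + k" using lookup_qe(1)[OF inj_sd disj_sd, of b a nv l k s "var_idx x"] 1
          unfolding m_def by (metis (no_types, lifting) not_less_iff_gr_or_eq trans_less_add1)
        thus ?thesis by (simp add: Vs_iff)
      next
        case 2
        hence "Poly_Mapping.lookup m x = 0" using lookup_qe(2)[OF inj_sd disj_sd, of b a nv l k s "var_idx x"]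
          unfolding m_def by metis
        thus ?thesis using x by (simp add: in_keys_iff)
      qed
    qed
    moreover have "\<forall>i<l. wt ?A (l + k) m i = 0" unfolding m_def using wt_qe[OF apos q(1)] by blast
    ultimately show ?thesis using q(2) by (auto simp: invm_def qmono_single m_def)
  qed
qed

lemma in_vars_single: "in_vars n (Poly_Mapping.single m c) \<longleftrightarrow> c = 0 \<or> Poly_Mapping.keys m \<subseteq> Vs n"
  by (auto simp: in_vars_def Vs_iff)

lemma keys_add_pm: "Poly_Mapping.keys (a + b :: (nat + nat) \<Rightarrow>\<^sub>0 nat) \<subseteq> Poly_Mapping.keys a \<union> Poly_Mapping.keys b"
  by (rule keys_add)

lemma gen_alg_inv:
  assumes apos: "\<forall>i<l. a i > 0"
  shows "f \<in> gen_alg (GG a nv l k) \<Longrightarrow> f \<in> inv_polys (typeI a nv l) l (l + k)"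
proof (induction rule: gen_alg.induct)
  case (const c)
  show ?case by (auto simp: inv_polys_def in_vars_def Const_def peval_single)
next
  case (gen g)
  then obtain m where m: "g = Poly_Mapping.single m 1" "invm (typeI a nv l) l (l + k) m"
    using gens_invm[OF apos] by blast
  show ?case using m mon_invariant
    by (auto simp: inv_polys_def in_vars_single invm_def peval_single)
next
  case (add f g)
  thus ?case using keys_add[of f g]
    by (auto simp: inv_polys_def in_vars_def peval_add)
next
  case (mult f g)
  have "in_vars (l + k) (f * g)"
    unfolding in_vars_def
  proof (intro ballI)
    fix m x assume m: "m \<in> Poly_Mapping.keys (f * g)" and x: "x \<in> Poly_Mapping.keys m"
    obtain p q where pq: "m = p + q" "p \<in> Poly_Mapping.keys f" "q \<in> Poly_Mapping.keys g"
      using keys_mult[of f g] m by blast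
    have "x \<in> Poly_Mapping.keys p \<or> x \<in> Poly_Mapping.keys q" using keys_add_pm[of p q] x pq(1) by blast
    thus "var_idx x < l + k" using mult.IH pq by (auto simp: inv_polys_def in_vars_def)
  qed
  thus ?case using mult.IH by (auto simp: inv_polys_def peval_mult)
qed

lemma inv_chi:
  assumes f: "f \<in> inv_polys A l n" and m: "m \<in> Poly_Mapping.keys f" and t: "in_torus l t"
  shows "chi A l t m = 1"
proof -
  let ?K = "Poly_Mapping.keys f"
  have "\<forall>z. (\<Sum>m\<in>?K. (Poly_Mapping.lookup f m * (chi A l t m - 1)) * mon m z) = 0"
  proof
    fix z
    have "peval f (act A l t z) = peval f z" using f t by (auto simp: inv_polys_def)
    hence "(\<Sum>m\<in>?K. Poly_Mapping.lookup f m * (chi A l t m * mon m z)) - (\<Sum>m\<in>?K. Poly_Mapping.lookup f m * mon m z) = 0"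
      by (simp add: peval_alt mon_act)
    thus "(\<Sum>m\<in>?K. (Poly_Mapping.lookup f m * (chi A l t m - 1)) * mon m z) = 0"
      by (simp add: sum_subtractf[symmetric] algebra_simps)
  qed
  from mon_indep[OF finite_keys this m] have "Poly_Mapping.lookup f m * (chi A l t m - 1) = 0" .
  thus ?thesis using m by (simp add: in_keys_iff)
qed

lemma inv_gen_alg:
  assumes apos: "\<forall>i<l. a i > 0" and cop: "\<forall>i<l. coprime (a i) (nv i)"
    and f: "f \<in> inv_polys (typeI a nv l) l (l + k)"
  shows "f \<in> gen_alg (GG a nv l k)"
proof -
  have "Poly_Mapping.single m (Poly_Mapping.lookup f m) \<in> gen_alg (GG a nv l k)" if m: "m \<in> Poly_Mapping.keys f" for m
  proof -
    have km: "Poly_Mapping.keys m \<subseteq> Vs (l + k)" using f m by (auto simp: inv_polys_def in_vars_def Vs_iff)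
    have "\<forall>i<l. wt (typeI a nv l) (l + k) m i = 0"
    proof (intro allI impI)
      fix i assume i: "i < l"
      show "wt (typeI a nv l) (l + k) m i = 0"
        by (rule wt_zero_from_chi[OF i km]) (intro allI impI inv_chi[OF f m])
    qed
    thus ?thesis by (rule single_c_gen[OF mono_gen[OF apos cop km]])
  qed
  hence "(\<Sum>m\<in>Poly_Mapping.keys f. Poly_Mapping.single m (Poly_Mapping.lookup f m)) \<in> gen_alg (GG a nv l k)"
    by (intro gen_alg_sum) blast
  thus ?thesis using pm_expand[of f] by simp
qed

lemma fibre_r:
  assumes z: "z \<in> zero_fibre (typeI a nv l) l (l + k)" and i: "i < l" and a: "a i > 0"
  shows "(cmod (z i))^2 = real (nv i) / real (a i) * (\<Sum>j<k. (cmod (z (l + j)))^2)"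
proof -
  have "(\<Sum>j<l+k. of_int (typeI a nv l i j) * (cmod (z j))^2) = (0::real)"
    using z i by (simp add: zero_fibre_def)
  moreover have "(\<Sum>j<l+k. of_int (typeI a nv l i j) * (cmod (z j))^2) =
     (\<Sum>j<l. of_int (typeI a nv l i j) * (cmod (z j))^2) + (\<Sum>j<k. of_int (typeI a nv l i (l + j)) * (cmod (z (l + j)))^2)"
    by (rule sum_split_add)
  moreover have "(\<Sum>j<l. of_int (typeI a nv l i j) * (cmod (z j))^2) = (\<Sum>j<l. if j = i then - real (a i) * (cmod (z i))^2 else 0)"
    by (rule sum.cong) (auto simp: typeI_def)
  moreover have "\<dots> = - real (a i) * (cmod (z i))^2" using i by simp
  moreover have "(\<Sum>j<k. of_int (typeI a nv l i (l + j)) * (cmod (z (l + j)))^2) = real (nv i) * (\<Sum>j<k. (cmod (z (l + j)))^2)"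
    by (simp add: typeI_def sum_distrib_left)
  ultimately have "real (a i) * (cmod (z i))^2 = real (nv i) * (\<Sum>j<k. (cmod (z (l + j)))^2)" by linarith
  thus ?thesis using a by (simp add: field_simps)
qed

lemma sqc: "(complex_of_real (cmod w))^2 = w * cnj w"
  by (metis complex_norm_square of_real_power)

lemma part2:
  assumes apos: "\<forall>i<l. a i > 0"
  shows "f \<in> gen_alg (GG a nv l k) \<Longrightarrow> \<exists>g\<in>gen_alg (gens_p l k \<union> gens_q a nv l k \<union> gens_qbar a nv l k).
            \<forall>z\<in>zero_fibre (typeI a nv l) l (l + k). peval f z = peval g z"
proof (induction rule: gen_alg.induct)
  case (const c) thus ?case by (intro bexI[of _ "Const c"] gen_alg.const) auto
next
  case (gen g)
  let ?G2 = "gens_p l k \<union> gens_q a nv l k \<union> gens_qbar a nv l k"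
  show ?case
  proof (cases "g \<in> gens_r l")
    case False
    hence "g \<in> ?G2" using gen by blast
    thus ?thesis by (intro bexI[of _ g] gen_alg.gen) auto
  next
    case True
    then obtain i where i: "i < l" "g = Var (Inl i) * Var (Inr i)" by (auto simp: gens_r_def)
    define h where "h = Const (of_real (real (nv i) / real (a i))) * (\<Sum>j<k. Var (Inl (l + j)) * Var (Inr (l + j)))"
    have "h \<in> gen_alg ?G2"
      unfolding h_def
      by (intro gen_alg.mult gen_alg.const gen_alg_sum ballI gen_alg.gen) (auto simp: gens_p_def)
    moreover have "peval g z = peval h z" if z: "z \<in> zero_fibre (typeI a nv l) l (l + k)" for z
    proof -
      have "peval g z = of_real ((cmod (z i))^2)"
        using complex_norm_square[of "z i"] by (simp add: i(2) peval_mult var_val_def)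
      also have "\<dots> = of_real (real (nv i) / real (a i) * (\<Sum>j<k. (cmod (z (l + j)))^2))"
        using fibre_r[OF z i(1)] apos i(1) by simp
      also have "\<dots> = peval h z"
        by (simp add: h_def peval_mult peval_sum var_val_def sqc)
      finally show ?thesis .
    qed
    ultimately show ?thesis by blast
  qed
next
  case (add f g)
  then obtain f' g' where "f' \<in> gen_alg (gens_p l k \<union> gens_q a nv l k \<union> gens_qbar a nv l k)"
    "g' \<in> gen_alg (gens_p l k \<union> gens_q a nv l k \<union> gens_qbar a nv l k)"
    "\<forall>z\<in>zero_fibre (typeI a nv l) l (l + k). peval f z = peval f' z"
    "\<forall>z\<in>zero_fibre (typeI a nv l) l (l + k). peval g z = peval g' z" by blast
  thus ?case by (intro bexI[of _ "f' + g'"] gen_alg.add) (auto simp: peval_add)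
next
  case (mult f g)
  then obtain f' g' where "f' \<in> gen_alg (gens_p l k \<union> gens_q a nv l k \<union> gens_qbar a nv l k)"
    "g' \<in> gen_alg (gens_p l k \<union> gens_q a nv l k \<union> gens_qbar a nv l k)"
    "\<forall>z\<in>zero_fibre (typeI a nv l) l (l + k). peval f z = peval f' z"
    "\<forall>z\<in>zero_fibre (typeI a nv l) l (l + k). peval g z = peval g' z" by blast
  thus ?case by (intro bexI[of _ "f' * g'"] gen_alg.mult) (auto simp: peval_mult)
qed

theorem proposition4p1:
  fixes a nv :: "nat \<Rightarrow> nat" and l k :: nat
  assumes "l \<ge> 1" and "k \<ge> 1"
    and "\<forall>i<l. a i > 0" and "\<forall>i<l. nv i > 0"
    and "faithful (typeI a nv l) l (l + k)"
  shows "inv_polys (typeI a nv l) l (l + k) =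
           gen_alg (gens_r l \<union> gens_p l k \<union> gens_q a nv l k \<union> gens_qbar a nv l k) \<and>
         (\<forall>f\<in>inv_polys (typeI a nv l) l (l + k).
           \<exists>g\<in>gen_alg (gens_p l k \<union> gens_q a nv l k \<union> gens_qbar a nv l k).
             \<forall>z\<in>zero_fibre (typeI a nv l) l (l + k). peval f z = peval g z)"
proof -
  have cop: "\<forall>i<l. coprime (a i) (nv i)"
    using faithful_coprime[OF assms(5)] assms(3) by blast
  have eq: "inv_polys (typeI a nv l) l (l + k) = gen_alg (gens_r l \<union> gens_p l k \<union> gens_q a nv l k \<union> gens_qbar a nv l k)"
    using inv_gen_alg[OF assms(3) cop] gen_alg_inv[OF assms(3)] by blast
  show ?thesis using eq part2[OF assms(3)] by blast
qed

end
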